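(* Let \(k\ge0\) and \(\lambda=(\lambda_1\ge\dots\ge\lambda_k\ge0)\). Then \[ \Sigma^{(k)}_\lambda=\bigsqcup_{J\succeq_k\lambda}\Sigma^{(k),\circ}_J, \] a disjoint union over strictly increasing sequences \(J\) of length at least \(k\) that \(k\)-dominate \(\lambda\).
   Context: \(\mathcal H\) is a separable infinite-dimensional complex Hilbert space with a fixed flag of closed subspaces \(\mathcal H=W_0\supset W_1\supset\cdots\), \(\mathrm{codim}_{\mathbb C}W_j=j\), \(\bigcap_jW_j=0\). \(\mathrm{Fred}_k\) denotes the bounded Fredholm operators of index \(k\). \(\Sigma^{(k)}_\lambda=\{T\in\mathrm{Fred}_k:\dim(\ker T\cap W_{\lambda_i+k-i})\ge i,\ i=1,\dots,k\}\). For \(J=(j_0<\dots<j_{r-1})\) of non-negative integers, an \(r\)-dimensional subspace \(V\) has exact type \(J\) if \(\dim(V\cap W_{j_q})=r-q\) and \(\dim(V\cap W_{j_q+1})=r-q-1\) for \(q=0,\dots,r-1\); \(\Sigma^{(k),\circ}_J=\{T\in\mathrm{Fred}_k:\ker T\text{ has exact type }J\}\). For \(J\) of length \(r\ge k\), \(J\succeq_k\lambda\) means \(j_{r-i}\ge\lambda_i+k-i\) for \(i=1,\dots,k\). *)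

theory Defs
  imports "HOL-Analysis.Analysis"
begin

text \<open>A complex Hilbert space is modelled as a real Banach space 'h together with a
complex scalar multiplication sc (extending the real one) and a complex inner
product ip (conjugate-linear in the first slot) inducing the norm.\<close>

definition is_chilbert :: "(complex \<Rightarrow> 'h::banach \<Rightarrow> 'h) \<Rightarrow> ('h \<Rightarrow> 'h \<Rightarrow> complex) \<Rightarrow> bool" where
  "is_chilbert sc ip \<longleftrightarrow>
     (\<forall>r x. sc (complex_of_real r) x = r *\<^sub>R x) \<and>
     (\<forall>a b x. sc (a * b) x = sc a (sc b x)) \<and>
     (\<forall>a b x. sc (a + b) x = sc a x + sc b x) \<and>
     (\<forall>a x y. sc a (x + y) = sc a x + sc a y) \<and>
     (\<forall>x y z. ip (x + y) z = ip x z + ip y z) \<and>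
     (\<forall>a x y. ip (sc a x) y = cnj a * ip x y) \<and>
     (\<forall>x y. ip y x = cnj (ip x y)) \<and>
     (\<forall>x. Im (ip x x) = 0 \<and> norm x = sqrt (Re (ip x x)))"

definition csubspace :: "(complex \<Rightarrow> 'h::real_vector \<Rightarrow> 'h) \<Rightarrow> 'h set \<Rightarrow> bool" where
  "csubspace sc S \<longleftrightarrow> 0 \<in> S \<and> (\<forall>x\<in>S. \<forall>y\<in>S. x + y \<in> S) \<and> (\<forall>a. \<forall>x\<in>S. sc a x \<in> S)"

definition cspan :: "(complex \<Rightarrow> 'h::real_vector \<Rightarrow> 'h) \<Rightarrow> 'h set \<Rightarrow> 'h set" where
  "cspan sc B = \<Inter>{S. csubspace sc S \<and> B \<subseteq> S}"

definition cindependent :: "(complex \<Rightarrow> 'h::real_vector \<Rightarrow> 'h) \<Rightarrow> 'h set \<Rightarrow> bool" where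
  "cindependent sc B \<longleftrightarrow> (\<forall>F c. finite F \<and> F \<subseteq> B \<and> (\<Sum>b\<in>F. sc (c b) b) = 0 \<longrightarrow> (\<forall>b\<in>F. c b = 0))"

definition cfindim :: "(complex \<Rightarrow> 'h::real_vector \<Rightarrow> 'h) \<Rightarrow> 'h set \<Rightarrow> bool" where
  "cfindim sc S \<longleftrightarrow> (\<exists>B. finite B \<and> cspan sc B = S)"

definition cdim :: "(complex \<Rightarrow> 'h::real_vector \<Rightarrow> 'h) \<Rightarrow> 'h set \<Rightarrow> nat" where
  "cdim sc S = (LEAST n. \<exists>B. finite B \<and> card B = n \<and> cspan sc B = S)"

definition ccodim_eq :: "(complex \<Rightarrow> 'h::real_vector \<Rightarrow> 'h) \<Rightarrow> 'h set \<Rightarrow> nat \<Rightarrow> bool" where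
  "ccodim_eq sc S n \<longleftrightarrow> (\<exists>B. finite B \<and> card B = n \<and> cindependent sc B \<and>
      cspan sc B \<inter> S = {0} \<and> {x + y | x y. x \<in> cspan sc B \<and> y \<in> S} = UNIV)"

definition cbounded_op :: "(complex \<Rightarrow> 'h::real_normed_vector \<Rightarrow> 'h) \<Rightarrow> ('h \<Rightarrow> 'h) \<Rightarrow> bool" where
  "cbounded_op sc T \<longleftrightarrow> bounded_linear T \<and> (\<forall>a x. T (sc a x) = sc a (T x))"

definition opker :: "('h::real_vector \<Rightarrow> 'h) \<Rightarrow> 'h set" where
  "opker T = {x. T x = 0}"

definition Fred :: "(complex \<Rightarrow> 'h::real_normed_vector \<Rightarrow> 'h) \<Rightarrow> int \<Rightarrow> ('h \<Rightarrow> 'h) set" where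
  "Fred sc k = {T. cbounded_op sc T \<and> cfindim sc (opker T) \<and> closed (range T) \<and>
      (\<exists>c. ccodim_eq sc (range T) c \<and> int (cdim sc (opker T)) - int c = k)}"

definition is_flag :: "(complex \<Rightarrow> 'h::real_normed_vector \<Rightarrow> 'h) \<Rightarrow> (nat \<Rightarrow> 'h set) \<Rightarrow> bool" where
  "is_flag sc W \<longleftrightarrow> W 0 = UNIV \<and> (\<forall>j. closed (W j) \<and> csubspace sc (W j) \<and> W (Suc j) \<subseteq> W j
      \<and> ccodim_eq sc (W j) j) \<and> (\<Inter>j. W j) = {0}"

text \<open>Partition lam = (lam_1 \<ge> ... \<ge> lam_k), stored 0-indexed: lam_i = lam ! (i-1).\<close>
definition Sigma_lam :: "(complex \<Rightarrow> 'h::real_normed_vector \<Rightarrow> 'h) \<Rightarrow> (nat \<Rightarrow> 'h set) \<Rightarrow> nat \<Rightarrow> nat list \<Rightarrow> ('h \<Rightarrow> 'h) set" where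
  "Sigma_lam sc W k lam = {T \<in> Fred sc (int k).
      \<forall>i\<in>{1..k}. cdim sc (opker T \<inter> W (lam ! (i - 1) + k - i)) \<ge> i}"

definition exact_type :: "(complex \<Rightarrow> 'h::real_normed_vector \<Rightarrow> 'h) \<Rightarrow> (nat \<Rightarrow> 'h set) \<Rightarrow> 'h set \<Rightarrow> nat list \<Rightarrow> bool" where
  "exact_type sc W V J \<longleftrightarrow> (let r = length J in cdim sc V = r \<and>
     (\<forall>q<r. cdim sc (V \<inter> W (J ! q)) = r - q \<and> cdim sc (V \<inter> W (J ! q + 1)) = r - q - 1))"

definition Sigma_circ :: "(complex \<Rightarrow> 'h::real_normed_vector \<Rightarrow> 'h) \<Rightarrow> (nat \<Rightarrow> 'h set) \<Rightarrow> nat \<Rightarrow> nat list \<Rightarrow> ('h \<Rightarrow> 'h) set" where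
  "Sigma_circ sc W k J = {T \<in> Fred sc (int k). exact_type sc W (opker T) J}"

definition kdominates :: "nat \<Rightarrow> nat list \<Rightarrow> nat list \<Rightarrow> bool" where
  "kdominates k J lam \<longleftrightarrow> length J \<ge> k \<and>
     (\<forall>i\<in>{1..k}. J ! (length J - i) \<ge> lam ! (i - 1) + k - i)"

end

theory Submission
  imports Defs
begin


context vector_space begin

lemma my_basis_fin:
  assumes "S \<subseteq> span F" "finite F"
  obtains B where "B \<subseteq> S" "independent B" "S \<subseteq> span B" "card B = dim S" "finite B"
proof -
  obtain B where B: "B \<subseteq> S" "independent B" "S \<subseteq> span B" "card B = dim S"
    using basis_exists by blast
  have "finite B" using independent_span_bound[OF assms(2) B(2)] B(1) assms(1) by blast
  then show ?thesis using B that by blast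
qed

lemma my_indep_le_dim:
  assumes "independent U" "U \<subseteq> S" "S \<subseteq> span F" "finite F"
  shows "finite U \<and> card U \<le> dim S"
proof -
  obtain B where B: "B \<subseteq> S" "independent B" "S \<subseteq> span B" "card B = dim S" "finite B"
    using my_basis_fin[OF assms(3,4)] by blast
  show ?thesis using independent_span_bound[OF B(5) assms(1)] B assms(2) by auto
qed

lemma my_dim_mono:
  assumes "A \<subseteq> B" "B \<subseteq> span F" "finite F"
  shows "dim A \<le> dim B"
proof -
  obtain Bb where B: "Bb \<subseteq> B" "independent Bb" "B \<subseteq> span Bb" "card Bb = dim B" "finite Bb"
    using my_basis_fin[OF assms(2,3)] by blast
  show ?thesis using dim_le_card[of A Bb] B assms(1) by auto
qed

lemma my_subspace_eq_dim:
  assumes "subspace A" "A \<subseteq> B" "B \<subseteq> span F" "finite F" "dim B \<le> dim A"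
  shows "A = B"
proof -
  have AF: "A \<subseteq> span F" using assms by blast
  obtain Ba where Ba: "Ba \<subseteq> A" "independent Ba" "A \<subseteq> span Ba" "card Ba = dim A" "finite Ba"
    using my_basis_fin[OF AF assms(4)] by blast
  have "B \<subseteq> span Ba"
  proof
    fix b assume b: "b \<in> B"
    show "b \<in> span Ba"
    proof (rule ccontr)
      assume nb: "b \<notin> span Ba"
      have ind: "independent (insert b Ba)" using independent_insertI[OF nb Ba(2)] .
      have "b \<notin> Ba" using nb span_base by blast
      then have "card (insert b Ba) = dim A + 1" using Ba by simp
      moreover have "card (insert b Ba) \<le> dim B"
        using my_indep_le_dim[OF ind _ assms(3,4)] b Ba(1) assms(2) by blast
      ultimately show False using assms(5) by simp
    qed
  qed
  then have "B \<subseteq> A" using span_minimal[OF Ba(1) assms(1)] by blast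
  then show ?thesis using assms(2) by blast
qed

lemma my_dim_pos:
  assumes "x \<in> S" "x \<noteq> 0" "S \<subseteq> span F" "finite F"
  shows "dim S \<ge> 1"
proof -
  have "independent {x}" using assms(2) by simp
  then have "card {x} \<le> dim S" using my_indep_le_dim[of "{x}" S F] assms by blast
  then show ?thesis by simp
qed

lemma my_indepD:
  assumes "independent A" "finite t" "t \<subseteq> A" "(\<Sum>v\<in>t. scale (u v) v) = 0" "v \<in> t"
  shows "u v = 0"
  using assms unfolding dependent_explicit by blast

lemma my_span_disj:
  assumes "independent D" "finite D" "C \<subseteq> D" "E \<subseteq> D" "C \<inter> E = {}"
    and "v \<in> span C" "v \<in> span E"
  shows "v = 0"
proof -
  have fC: "finite C" using assms(2,3) finite_subset by blast
  have fE: "finite E" using assms(2,4) finite_subset by blast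
  obtain a where a: "v = (\<Sum>x\<in>C. scale (a x) x)" using assms(6) span_finite[OF fC] by auto
  obtain b where b: "v = (\<Sum>x\<in>E. scale (b x) x)" using assms(7) span_finite[OF fE] by auto
  define u where "u x = (if x \<in> C then a x else - b x)" for x
  have s1: "(\<Sum>x\<in>C. scale (u x) x) = v" unfolding a u_def by (rule sum.cong) auto
  have s2: "(\<Sum>x\<in>E. scale (u x) x) = - v" unfolding b u_def using assms(5)
    by (auto simp: sum_negf[symmetric] intro!: sum.cong)
  have "(\<Sum>x\<in>C \<union> E. scale (u x) x) = (\<Sum>x\<in>C. scale (u x) x) + (\<Sum>x\<in>E. scale (u x) x)"
    by (rule sum.union_disjoint[OF fC fE assms(5)])
  also have "\<dots> = 0" unfolding s1 s2 by simp
  finally have z: "(\<Sum>x\<in>C \<union> E. scale (u x) x) = 0" .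
  have ind: "independent (C \<union> E)" using independent_mono[OF assms(1)] assms(3,4) by blast
  have fCE: "finite (C \<union> E)" using fC fE by simp
  have "a x = 0" if "x \<in> C" for x
  proof -
    have "u x = 0" using my_indepD[OF ind fCE subset_refl z] that by blast
    then show ?thesis using that unfolding u_def by simp
  qed
  then have "(\<Sum>x\<in>C. scale (a x) x) = 0" by (intro sum.neutral) simp
  then show ?thesis using a by simp
qed

lemma my_indep_union:
  assumes "independent A" "independent B" "span A \<inter> span B \<subseteq> {0}"
  shows "independent (A \<union> B)"
proof
  assume "dependent (A \<union> B)"
  then obtain t u where t: "finite t" "t \<subseteq> A \<union> B" "(\<Sum>v\<in>t. scale (u v) v) = 0" "\<exists>v\<in>t. u v \<noteq> 0"
    unfolding dependent_explicit by blast
  define tA where "tA = t \<inter> A"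
  define tB where "tB = t - A"
  have fin: "finite tA" "finite tB" using t(1) tA_def tB_def by auto
  have tt: "t = tA \<union> tB" "tA \<inter> tB = {}" unfolding tA_def tB_def by auto
  have split: "(\<Sum>v\<in>t. scale (u v) v) = (\<Sum>v\<in>tA. scale (u v) v) + (\<Sum>v\<in>tB. scale (u v) v)"
    unfolding tt(1) by (rule sum.union_disjoint[OF fin tt(2)])
  have tAA: "tA \<subseteq> A" unfolding tA_def by blast
  have tBB: "tB \<subseteq> B" unfolding tB_def using t(2) by blast
  have sA: "(\<Sum>v\<in>tA. scale (u v) v) \<in> span A"
    by (rule span_sum, rule span_scale, rule span_base) (use tAA in blast)
  have sB: "(\<Sum>v\<in>tB. scale (u v) v) \<in> span B"
    by (rule span_sum, rule span_scale, rule span_base) (use tBB in blast)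
  have s0: "(\<Sum>v\<in>tA. scale (u v) v) + (\<Sum>v\<in>tB. scale (u v) v) = 0"
    using split t(3) by simp
  then have eq: "(\<Sum>v\<in>tA. scale (u v) v) = - (\<Sum>v\<in>tB. scale (u v) v)"
    by (rule add_eq_0_iff2[THEN iffD1])
  then have "(\<Sum>v\<in>tA. scale (u v) v) \<in> span B" using span_neg[OF sB] by simp
  then have zA: "(\<Sum>v\<in>tA. scale (u v) v) = 0" using sA assms(3) by blast
  then have zB: "(\<Sum>v\<in>tB. scale (u v) v) = 0" using s0 by simp
  have "u v = 0" if "v \<in> t" for v
  proof (cases "v \<in> A")
    case True
    then have "v \<in> tA" using that tA_def by blast
    then show ?thesis using my_indepD[OF assms(1) fin(1) tAA zA] by blast
  next
    case False
    then have "v \<in> tB" using that tB_def by blast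
    then show ?thesis using my_indepD[OF assms(2) fin(2) tBB zB] by blast
  qed
  then show False using t(4) by blast
qed

end

lemma my_bridge:
  fixes sc :: "complex \<Rightarrow> 'h::real_vector \<Rightarrow> 'h"
  assumes vs: "vector_space sc"
  shows "csubspace sc S = module.subspace sc S"
    and "cspan sc B = module.span sc B"
    and "cindependent sc B \<longleftrightarrow> \<not> module.dependent sc B"
proof -
  interpret vector_space sc by (rule vs)
  show 1: "csubspace sc S = subspace S" for S
    by (simp add: csubspace_def subspace_def)
  show "cspan sc B = span B"
    unfolding cspan_def span_def hull_def 1 by simp
  show "cindependent sc B \<longleftrightarrow> independent B"
    unfolding cindependent_def dependent_explicit by blast
qed

lemma my_cdim_eq:
  fixes sc :: "complex \<Rightarrow> 'h::real_vector \<Rightarrow> 'h"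
  assumes vs: "vector_space sc"
  assumes "module.subspace sc S" "S \<subseteq> module.span sc F" "finite F"
  shows "cdim sc S = vector_space.dim sc S"
proof -
  interpret vector_space sc by (rule vs)
  obtain B where B: "B \<subseteq> S" "independent B" "S \<subseteq> span B" "card B = dim S" "finite B"
    using my_basis_fin[OF assms(3,4)] by blast
  have "span B = S" using span_subspace[OF B(1) B(3) assms(2)] .
  show ?thesis unfolding cdim_def my_bridge(2)[OF vs]
  proof (rule Least_equality)
    show "\<exists>B. finite B \<and> card B = dim S \<and> span B = S" using B \<open>span B = S\<close> by blast
  next
    fix y assume "\<exists>B. finite B \<and> card B = y \<and> span B = S"
    then obtain B' where "finite B'" "card B' = y" "span B' = S" by blast
    then show "dim S \<le> y" using dim_le_card[of S B'] by auto
  qed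
qed


context vector_space begin

lemma my_codim_bound:
  assumes fB: "finite B" and BS: "span B \<inter> S = {0}" and dec: "\<forall>x. \<exists>y\<in>span B. x - y \<in> S"
    and sS: "subspace S" and iU: "independent U" and US: "span U \<inter> S \<subseteq> {0}"
  shows "finite U \<and> card U \<le> card B"
proof -
  define p where "p u = (SOME y. y \<in> span B \<and> u - y \<in> S)" for u
  have p: "p u \<in> span B \<and> u - p u \<in> S" for u
  proof -
    from dec obtain y where "y \<in> span B" "u - y \<in> S" by blast
    then have "y \<in> span B \<and> u - y \<in> S" by blast
    then show ?thesis unfolding p_def by (rule someI)
  qed
  have inj: "inj_on p U"
  proof (rule inj_onI)
    fix u u' assume uu: "u \<in> U" "u' \<in> U" "p u = p u'"
    have "(u - p u) - (u' - p u') \<in> S" by (rule subspace_diff[OF sS]) (use p in blast)+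
    moreover have "u - u' = (u - p u) - (u' - p u')" using uu(3) by simp
    ultimately have "u - u' \<in> S" by simp
    moreover have "u - u' \<in> span U" using uu by (intro span_diff span_base)
    ultimately have "u - u' = 0" using US by blast
    then show "u = u'" by simp
  qed
  have ind: "independent (p ` U)"
  proof
    assume "dependent (p ` U)"
    then obtain t c where t: "finite t" "t \<subseteq> p ` U" "(\<Sum>v\<in>t. scale (c v) v) = 0" "\<exists>v\<in>t. c v \<noteq> 0"
      unfolding dependent_explicit by blast
    define t' where "t' = {u\<in>U. p u \<in> t}"
    have tt: "t = p ` t'" using t(2) unfolding t'_def by blast
    have inj': "inj_on p t'" using inj unfolding t'_def by (rule inj_on_subset) blast
    have "finite (p ` t')" using t(1) tt by simp
    then have ft': "finite t'" using finite_imageD[OF _ inj'] by blast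
    have t'U: "t' \<subseteq> U" unfolding t'_def by blast
    define w where "w = (\<Sum>u\<in>t'. scale (c (p u)) u)"
    have s0: "(\<Sum>u\<in>t'. scale (c (p u)) (p u)) = 0"
      using t(3) unfolding tt sum.reindex[OF inj'] by (simp add: comp_def)
    have "w = w - (\<Sum>u\<in>t'. scale (c (p u)) (p u))" using s0 by simp
    also have "\<dots> = (\<Sum>u\<in>t'. scale (c (p u)) (u - p u))"
      unfolding w_def sum_subtractf[symmetric] scale_right_diff_distrib ..
    finally have weq: "w = (\<Sum>u\<in>t'. scale (c (p u)) (u - p u))" .
    have "(\<Sum>u\<in>t'. scale (c (p u)) (u - p u)) \<in> S"
      by (rule subspace_sum[OF sS], rule subspace_scale[OF sS]) (use p in blast)
    then have "w \<in> S" using weq by simp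
    moreover have "w \<in> span U" unfolding w_def
      by (rule span_sum, rule span_scale, rule span_base) (use t'U in blast)
    ultimately have w0: "w = 0" using US by blast
    have "c (p u) = 0" if "u \<in> t'" for u
      using my_indepD[OF iU ft' t'U w0[unfolded w_def] that] .
    then show False using t(4) tt by blast
  qed
  have "p ` U \<subseteq> span B" using p by blast
  from independent_span_bound[OF fB ind this]
  have "finite (p ` U)" "card (p ` U) \<le> card B" by auto
  moreover have "finite U" using finite_imageD[OF \<open>finite (p ` U)\<close> inj] .
  ultimately show ?thesis using card_image[OF inj] by simp
qed

lemma my_step:
  assumes sX: "subspace X" and XF: "X \<subseteq> span F" and fF: "finite F"
    and sWa: "subspace Wa" and sWb: "subspace Wb" and WW: "Wb \<subseteq> Wa"
    and iBa: "independent Ba" and Ba: "span Ba \<inter> Wa = {0}" and cBa: "card Ba = j"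
    and fBb: "finite Bb" and Bb: "span Bb \<inter> Wb = {0}" and decb: "\<forall>x. \<exists>y\<in>span Bb. x - y \<in> Wb"
    and cBb: "card Bb = Suc j"
  shows "dim (X \<inter> Wa) \<le> Suc (dim (X \<inter> Wb))"
proof -
  define Y where "Y = X \<inter> Wb"
  define Z where "Z = X \<inter> Wa"
  have sY: "subspace Y" unfolding Y_def using sX sWb subspace_inter by blast
  have sZ: "subspace Z" unfolding Z_def using sX sWa subspace_inter by blast
  have YZ: "Y \<subseteq> Z" unfolding Y_def Z_def using WW by blast
  have ZF: "Z \<subseteq> span F" and YF: "Y \<subseteq> span F" unfolding Z_def Y_def using XF by blast+
  obtain C where C: "C \<subseteq> Y" "independent C" "Y \<subseteq> span C" "card C = dim Y" "finite C"
    using my_basis_fin[OF YF fF] by blast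
  obtain D where D: "C \<subseteq> D" "D \<subseteq> Z" "independent D" "Z \<subseteq> span D"
    using maximal_independent_subset_extend[of C Z] C(1,2) YZ by blast
  have fD: "finite D" using independent_span_bound[OF fF D(3)] D(2) ZF by blast
  have cD: "card D = dim Z" using basis_card_eq_dim[OF D(2) D(4) D(3)] .
  define E where "E = D - C"
  have "card E = card D - card C" unfolding E_def by (rule card_Diff_subset[OF C(5) D(1)])
  moreover have "card C \<le> card D" by (rule card_mono[OF fD D(1)])
  ultimately have cDE: "card D = card C + card E" by simp
  have ED: "E \<subseteq> D" "C \<inter> E = {}" unfolding E_def by auto
  have fE: "finite E" using fD ED finite_subset by blast
  have iE: "independent E" using independent_mono[OF D(3) ED(1)] .
  have spEZ: "span E \<subseteq> Z" using span_minimal[OF _ sZ] ED(1) D(2) by blast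
  have EWb: "span E \<inter> Wb \<subseteq> {0}"
  proof
    fix v assume v: "v \<in> span E \<inter> Wb"
    then have "v \<in> Y" unfolding Y_def using spEZ Z_def by blast
    then have "v \<in> span C" using C(3) by blast
    then have "v = 0" using my_span_disj[OF D(3) fD D(1) ED(1) ED(2)] v by blast
    then show "v \<in> {0}" by simp
  qed
  have BaE: "span Ba \<inter> span E \<subseteq> {0}" using spEZ Ba unfolding Z_def by blast
  have iU: "independent (Ba \<union> E)" using my_indep_union[OF iBa iE BaE] .
  have UWb: "span (Ba \<union> E) \<inter> Wb \<subseteq> {0}"
  proof
    fix v assume v: "v \<in> span (Ba \<union> E) \<inter> Wb"
    then obtain x y where xy: "v = x + y" "x \<in> span Ba" "y \<in> span E" unfolding span_Un by blast
    have "y \<in> Wa" using xy(3) spEZ Z_def by blast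
    moreover have "v \<in> Wa" using v WW by blast
    ultimately have "v - y \<in> Wa" using subspace_diff[OF sWa] by blast
    then have "x \<in> Wa" using xy(1) by simp
    then have "x = 0" using xy(2) Ba by blast
    then have "y \<in> span E \<inter> Wb" using xy v by simp
    then have "y = 0" using EWb by blast
    then show "v \<in> {0}" using xy(1) \<open>x = 0\<close> by simp
  qed
  have cU: "card (Ba \<union> E) \<le> Suc j" using my_codim_bound[OF fBb Bb decb sWb iU UWb] cBb by simp
  have disj: "Ba \<inter> E = {}"
  proof (rule ccontr)
    assume "Ba \<inter> E \<noteq> {}"
    then obtain e where e: "e \<in> Ba" "e \<in> E" by blast
    then have "e \<in> span Ba \<inter> span E" using span_base by blast
    then have "e = 0" using BaE by blast
    then show False using e(2) iE dependent_zero by blast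
  qed
  have "finite (Ba \<union> E)" using my_codim_bound[OF fBb Bb decb sWb iU UWb] by blast
  then have fBa: "finite Ba" by simp
  have "card (Ba \<union> E) = j + card E" using card_Un_disjoint[OF fBa fE disj] cBa by simp
  then have "card E \<le> 1" using cU by simp
  then show ?thesis using cD cDE C(4) unfolding Y_def Z_def by simp
qed

lemma my_eventually_zero:
  assumes sX: "subspace X" and XF: "X \<subseteq> span F" and fF: "finite F"
    and sW: "\<forall>j. subspace (W j)" and dec: "\<forall>j. W (Suc j) \<subseteq> W j" and int: "(\<Inter>j. W j) = {0}"
  shows "\<exists>N. dim (X \<inter> W N) = 0"
proof -
  define d where "d j = dim (X \<inter> W j)" for j
  have anti: "W j' \<subseteq> W j" if "j \<le> j'" for j j'
    using lift_Suc_antimono_le[of W, OF _ that] dec by blast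
  define m where "m = (LEAST v. \<exists>j. v = d j)"
  have "\<exists>j. m = d j" unfolding m_def by (rule LeastI[of _ "d 0"]) auto
  then obtain N where N: "m = d N" by blast
  have Nmin: "d N \<le> d j" for j unfolding N[symmetric] m_def by (rule Least_le) auto
  show ?thesis
  proof (rule ccontr)
    assume nz: "\<nexists>N. dim (X \<inter> W N) = 0"
    have "\<exists>x\<in>X \<inter> W N. x \<noteq> 0"
    proof (rule ccontr)
      assume "\<not> ?thesis"
      then have sub: "X \<inter> W N \<subseteq> {0}" by blast
      obtain B where B: "B \<subseteq> X \<inter> W N" "independent B" "card B = dim (X \<inter> W N)"
        using basis_exists by metis
      have "B = {}" using B(1,2) sub dependent_zero by blast
      then have "dim (X \<inter> W N) = 0" using B(3) by simp
      then show False using nz by blast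
    qed
    then obtain x where x: "x \<in> X" "x \<in> W N" "x \<noteq> 0" by blast
    have "x \<in> W j" for j
    proof (cases "j \<le> N")
      case True then show ?thesis using anti x by blast
    next
      case False
      then have "W j \<subseteq> W N" using anti[of N j] by simp
      then have sub: "X \<inter> W j \<subseteq> X \<inter> W N" by blast
      have "X \<inter> W N \<subseteq> span F" using XF by blast
      moreover have "dim (X \<inter> W N) \<le> dim (X \<inter> W j)" using Nmin unfolding d_def by simp
      ultimately have "X \<inter> W j = X \<inter> W N"
        using my_subspace_eq_dim[OF subspace_inter[OF sX sW[rule_format]] sub _ fF] by blast
      then show ?thesis using x by blast
    qed
    then have "x \<in> (\<Inter>j. W j)" by blast
    then show False using int x(3) by blast
  qed
qed

end


lemma my_jumps_exist:
  fixes d :: "nat \<Rightarrow> nat"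
  assumes d0: "d 0 = r" and anti: "\<And>j j'. j \<le> j' \<Longrightarrow> d j' \<le> d j"
    and step: "\<And>j. d j \<le> Suc (d (Suc j))" and ev: "\<exists>N. d N = 0"
  shows "\<exists>J. length J = r \<and> sorted_wrt (<) J \<and> (\<forall>q<r. d (J!q) = r - q \<and> d (J!q + 1) = r - q - 1)"
proof -
  define f where "f q = (LEAST j. d (Suc j) < r - q)" for q
  obtain N where N: "d N = 0" using ev by blast
  have ex: "\<exists>j. d (Suc j) < r - q" if "q < r" for q
  proof -
    have "d (Suc N) \<le> d N" using anti[of N "Suc N"] by simp
    then show ?thesis using N that by (intro exI[of _ N]) simp
  qed
  have fprop: "d (f q) = r - q \<and> d (f q + 1) = r - q - 1" if q: "q < r" for q
  proof -
    have a: "d (Suc (f q)) < r - q" unfolding f_def using LeastI_ex[OF ex[OF q]] .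
    have b: "d (f q) \<ge> r - q"
    proof (cases "f q")
      case 0 then show ?thesis using d0 by simp
    next
      case (Suc j')
      have "j' < f q" using Suc by simp
      then have "\<not> d (Suc j') < r - q" unfolding f_def by (rule not_less_Least)
      then show ?thesis using Suc by simp
    qed
    have c: "d (f q) \<le> Suc (d (Suc (f q)))" by (rule step)
    show ?thesis using a b c by simp
  qed
  define J where "J = map f [0..<r]"
  have lenJ: "length J = r" unfolding J_def by simp
  have nthJ: "J ! q = f q" if "q < r" for q unfolding J_def using that by simp
  have "sorted_wrt (<) J"
    unfolding sorted_wrt_iff_nth_less lenJ
  proof (intro allI impI)
    fix i j assume ij: "i < j" "j < r"
    have di: "d (f i) = r - i" and dj: "d (f j) = r - j" using fprop ij by auto
    show "J ! i < J ! j"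
    proof (rule ccontr)
      assume "\<not> J ! i < J ! j"
      then have "f j \<le> f i" using nthJ ij by simp
      then have "d (f i) \<le> d (f j)" by (rule anti)
      then show False using di dj ij by simp
    qed
  qed
  then show ?thesis using lenJ nthJ fprop by (intro exI[of _ J]) auto
qed

lemma my_type_unique:
  fixes d :: "nat \<Rightarrow> nat"
  assumes anti: "\<And>j j'. j \<le> j' \<Longrightarrow> d j' \<le> d j"
    and L: "length J = r" "length J' = r"
    and P: "\<forall>q<r. d (J!q) = r - q \<and> d (J!q + 1) = r - q - 1"
    and P': "\<forall>q<r. d (J'!q) = r - q \<and> d (J'!q + 1) = r - q - 1"
  shows "J = J'"
proof (rule nth_equalityI)
  show "length J = length J'" using L by simp
next
  fix q assume "q < length J"
  then have q: "q < r" using L by simp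
  have aux: "\<not> A ! q < B ! q" if "\<forall>q<r. d (A!q) = r - q \<and> d (A!q + 1) = r - q - 1"
      "\<forall>q<r. d (B!q) = r - q \<and> d (B!q + 1) = r - q - 1" for A B
  proof
    assume "A ! q < B ! q"
    then have "d (B ! q) \<le> d (A ! q + 1)" by (intro anti) simp
    then show False using that q by fastforce
  qed
  show "J ! q = J' ! q" using aux[OF P P'] aux[OF P' P] by simp
qed

lemma my_vs:
  fixes sc :: "complex \<Rightarrow> 'h::banach \<Rightarrow> 'h"
  assumes "is_chilbert sc ip"
  shows "vector_space sc"
proof -
  have h: "\<forall>r x. sc (complex_of_real r) x = r *\<^sub>R x" "\<forall>a b x. sc (a * b) x = sc a (sc b x)"
    "\<forall>a b x. sc (a + b) x = sc a x + sc b x" "\<forall>a x y. sc a (x + y) = sc a x + sc a y"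
    using assms unfolding is_chilbert_def by blast+
  have "sc 1 x = x" for x using h(1)[rule_format, of 1 x] by simp
  then show ?thesis unfolding vector_space_def using h by simp
qed

lemma my_key:
  fixes sc :: "complex \<Rightarrow> 'h::banach \<Rightarrow> 'h"
  assumes vs: "vector_space sc" and flag: "is_flag sc W" and T: "T \<in> Fred sc (int k)"
  shows "cdim sc (opker T \<inter> W 0) = cdim sc (opker T)"
    and "k \<le> cdim sc (opker T)"
    and "\<And>j j'. j \<le> j' \<Longrightarrow> cdim sc (opker T \<inter> W j') \<le> cdim sc (opker T \<inter> W j)"
    and "\<And>j. cdim sc (opker T \<inter> W j) \<le> Suc (cdim sc (opker T \<inter> W (Suc j)))"
    and "\<exists>N. cdim sc (opker T \<inter> W N) = 0"
proof -
  interpret vector_space sc by (rule vs)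
  define V where "V = opker T"
  have T': "cbounded_op sc T \<and> cfindim sc (opker T) \<and> closed (range T) \<and>
      (\<exists>c. ccodim_eq sc (range T) c \<and> int (cdim sc (opker T)) - int c = int k)"
    using T unfolding Fred_def by simp
  then have TF: "cfindim sc (opker T)" by blast
  from T' obtain c where "int (cdim sc (opker T)) - int c = int k" by blast
  then show "k \<le> cdim sc (opker T)" by linarith
  obtain F where F: "finite F" "span F = V" using TF unfolding cfindim_def my_bridge(2)[OF vs] V_def by blast
  have sV: "subspace V" using F(2) subspace_span by metis
  have fl0: "W 0 = UNIV \<and> (\<forall>j. closed (W j) \<and> csubspace sc (W j) \<and> W (Suc j) \<subseteq> W j
      \<and> ccodim_eq sc (W j) j) \<and> (\<Inter>j. W j) = {0}"
    using flag unfolding is_flag_def by simp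
  have fl: "W 0 = UNIV" "\<And>j. subspace (W j)" "\<And>j. W (Suc j) \<subseteq> W j" "\<And>j. ccodim_eq sc (W j) j"
    "(\<Inter>j. W j) = {0}"
    using fl0 unfolding my_bridge(1)[OF vs] by simp_all
  have dd: "cdim sc (V \<inter> W j) = dim (V \<inter> W j)" for j
    by (rule my_cdim_eq[OF vs subspace_inter[OF sV fl(2)], where F=F]) (use F in blast)+
  show "cdim sc (opker T \<inter> W 0) = cdim sc (opker T)" using fl(1) by simp
  have antiW: "W j' \<subseteq> W j" if "j \<le> j'" for j j'
    using lift_Suc_antimono_le[of W, OF _ that] fl(3) by blast
  show "cdim sc (opker T \<inter> W j') \<le> cdim sc (opker T \<inter> W j)" if "j \<le> j'" for j j'
    unfolding V_def[symmetric] dd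
    by (rule my_dim_mono[where F=F]) (use antiW[OF that] F in blast)+
  show "\<exists>N. cdim sc (opker T \<inter> W N) = 0"
    unfolding V_def[symmetric] dd
    by (rule my_eventually_zero[OF sV _ F(1)]) (use F(2) fl in blast)+
  show "cdim sc (opker T \<inter> W j) \<le> Suc (cdim sc (opker T \<inter> W (Suc j)))" for j
  proof -
    obtain Ba where Ba: "finite Ba" "card Ba = j" "independent Ba" "span Ba \<inter> W j = {0}"
      using fl(4)[of j] unfolding ccodim_eq_def my_bridge(2,3)[OF vs] by blast
    obtain Bb where Bb: "finite Bb" "card Bb = Suc j" "span Bb \<inter> W (Suc j) = {0}"
      "{x + y |x y. x \<in> span Bb \<and> y \<in> W (Suc j)} = UNIV"
      using fl(4)[of "Suc j"] unfolding ccodim_eq_def my_bridge(2,3)[OF vs] by blast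
    have decb: "\<forall>x. \<exists>y\<in>span Bb. x - y \<in> W (Suc j)"
    proof
      fix x
      have "x \<in> {x + y |x y. x \<in> span Bb \<and> y \<in> W (Suc j)}" using Bb(4) by simp
      then obtain a b where "x = a + b" "a \<in> span Bb" "b \<in> W (Suc j)" by blast
      then show "\<exists>y\<in>span Bb. x - y \<in> W (Suc j)" by (intro bexI[of _ a]) simp_all
    qed
    show ?thesis unfolding V_def[symmetric] dd
      by (rule my_step[OF sV _ F(1) fl(2) fl(2) fl(3) Ba(3) Ba(4) Ba(2) Bb(1) Bb(3) decb Bb(2)])
        (use F in blast)
  qed
qed


theorem lemma4p13:
  fixes sc :: "complex \<Rightarrow> 'h::banach \<Rightarrow> 'h"
    and ip :: "'h \<Rightarrow> 'h \<Rightarrow> complex"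
    and W :: "nat \<Rightarrow> 'h set"
    and k :: nat and lam :: "nat list"
  assumes hilb: "is_chilbert sc ip"
    and sep: "\<exists>D::'h set. countable D \<and> closure D = UNIV"
    and infdim: "\<exists>B. cindependent sc B \<and> infinite B"
    and flag: "is_flag sc W"
    and lam_len: "length lam = k"
    and lam_dec: "\<forall>i j. i \<le> j \<and> j < k \<longrightarrow> lam ! j \<le> lam ! i"
  shows "Sigma_lam sc W k lam =
           (\<Union>J \<in> {J. sorted_wrt (<) J \<and> kdominates k J lam}. Sigma_circ sc W k J)
         \<and> (\<forall>J J'. sorted_wrt (<) J \<and> kdominates k J lam \<and>
                  sorted_wrt (<) J' \<and> kdominates k J' lam \<and> J \<noteq> J' \<longrightarrow>
                  Sigma_circ sc W k J \<inter> Sigma_circ sc W k J' = {})"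
proof -
  have vs: "vector_space sc" by (rule my_vs[OF hilb])
  define m where "m i = lam ! (i - 1) + k - i" for i
  have circ: "T \<in> Sigma_circ sc W k J \<longleftrightarrow> T \<in> Fred sc (int k) \<and>
      cdim sc (opker T) = length J \<and>
      (\<forall>q<length J. cdim sc (opker T \<inter> W (J ! q)) = length J - q \<and>
         cdim sc (opker T \<inter> W (J ! q + 1)) = length J - q - 1)" for T J
    unfolding Sigma_circ_def exact_type_def Let_def by simp
  have lamc: "T \<in> Sigma_lam sc W k lam \<longleftrightarrow> T \<in> Fred sc (int k) \<and>
      (\<forall>i\<in>{1..k}. i \<le> cdim sc (opker T \<inter> W (m i)))" for T
    unfolding Sigma_lam_def m_def by simp
  have kdom: "kdominates k J lam \<longleftrightarrow> k \<le> length J \<and> (\<forall>i\<in>{1..k}. m i \<le> J ! (length J - i))" for J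
    unfolding kdominates_def m_def by simp
  have sub1: "T \<in> (\<Union>J \<in> {J. sorted_wrt (<) J \<and> kdominates k J lam}. Sigma_circ sc W k J)"
    if T: "T \<in> Sigma_lam sc W k lam" for T
  proof -
    have TF: "T \<in> Fred sc (int k)" and big: "\<forall>i\<in>{1..k}. i \<le> cdim sc (opker T \<inter> W (m i))"
      using T lamc by blast+
    define d where "d j = cdim sc (opker T \<inter> W j)" for j
    define r where "r = cdim sc (opker T)"
    note K = my_key[OF vs flag TF, folded d_def r_def]
    obtain J where J: "length J = r" "sorted_wrt (<) J"
        "\<forall>q<r. d (J!q) = r - q \<and> d (J!q + 1) = r - q - 1"
      using my_jumps_exist[of d r] K by blast
    have "m i \<le> J ! (r - i)" if i: "i \<in> {1..k}" for i
    proof (rule ccontr)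
      assume "\<not> m i \<le> J ! (r - i)"
      then have "J ! (r - i) + 1 \<le> m i" by simp
      then have "d (m i) \<le> d (J ! (r - i) + 1)" by (rule K(3))
      moreover have "r - i < r" using i K(2) by auto
      then have "d (J ! (r - i) + 1) = r - (r - i) - 1" using J(3) by blast
      moreover have "i \<le> d (m i)" using big i unfolding d_def by blast
      ultimately show False using i K(2) by auto
    qed
    then have "kdominates k J lam" unfolding kdom using J(1) K(2) by simp
    moreover have "T \<in> Sigma_circ sc W k J" unfolding circ using TF J unfolding d_def r_def by simp
    ultimately show ?thesis using J(2) by blast
  qed
  have sub2: "T \<in> Sigma_lam sc W k lam"
    if J: "sorted_wrt (<) J" "kdominates k J lam" and T: "T \<in> Sigma_circ sc W k J" for T J
  proof -
    have TF: "T \<in> Fred sc (int k)" using T circ by blast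
    define d where "d j = cdim sc (opker T \<inter> W j)" for j
    define r where "r = cdim sc (opker T)"
    note K = my_key[OF vs flag TF, folded d_def r_def]
    have lr: "length J = r" and P: "\<forall>q<r. d (J!q) = r - q \<and> d (J!q + 1) = r - q - 1"
      using T unfolding circ d_def r_def by auto
    have kd: "k \<le> r" "\<forall>i\<in>{1..k}. m i \<le> J ! (r - i)" using J(2) unfolding kdom lr by auto
    have "i \<le> d (m i)" if i: "i \<in> {1..k}" for i
    proof -
      have "r - i < r" using i kd by auto
      then have "d (J ! (r - i)) = i" using P i kd by auto
      moreover have "d (J ! (r - i)) \<le> d (m i)" using kd(2) i K(3) by blast
      ultimately show ?thesis by simp
    qed
    then show ?thesis unfolding lamc d_def using TF by blast
  qed
  have disj: "Sigma_circ sc W k J \<inter> Sigma_circ sc W k J' = {}" if "J \<noteq> J'" for J J'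
  proof (rule ccontr)
    assume "Sigma_circ sc W k J \<inter> Sigma_circ sc W k J' \<noteq> {}"
    then obtain T where T: "T \<in> Sigma_circ sc W k J" "T \<in> Sigma_circ sc W k J'" by blast
    have TF: "T \<in> Fred sc (int k)" using T circ by blast
    define d where "d j = cdim sc (opker T \<inter> W j)" for j
    define r where "r = cdim sc (opker T)"
    note K = my_key[OF vs flag TF, folded d_def r_def]
    have "length J = r" "\<forall>q<r. d (J!q) = r - q \<and> d (J!q + 1) = r - q - 1"
      using T(1) unfolding circ d_def r_def by auto
    moreover have "length J' = r" "\<forall>q<r. d (J'!q) = r - q \<and> d (J'!q + 1) = r - q - 1"
      using T(2) unfolding circ d_def r_def by auto
    ultimately have "J = J'" using my_type_unique[of d J r J'] K(3) by blast
    then show False using that by simp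
  qed
  show ?thesis
  proof
    show "Sigma_lam sc W k lam = (\<Union>J \<in> {J. sorted_wrt (<) J \<and> kdominates k J lam}. Sigma_circ sc W k J)"
      using sub1 sub2 by blast
  next
    show "\<forall>J J'. sorted_wrt (<) J \<and> kdominates k J lam \<and>
                  sorted_wrt (<) J' \<and> kdominates k J' lam \<and> J \<noteq> J' \<longrightarrow>
                  Sigma_circ sc W k J \<inter> Sigma_circ sc W k J' = {}"
      using disj by blast
  qed
qed

end
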